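(* Let $a\in\mathbb{R}$ with $a\ge1$ and let $n,s,t\in\mathbb{N}$ with $1\le s\le t\le n$. Assume $as+t\ge n$, $t\ge as$ and $s+as\le t$. Then the number $\mathcal{M}^{(a)}(n,s,t)$ of monochromatic generalized Schur triples of $\{1,\dots,n\}$ under the coloring $R^sB^{t-s}R^{n-t}$ equals \[ \sum_{y=1}^{\lfloor s/a\rfloor}\ \sum_{x=1}^{s-\lfloor ay\rfloor}1\;+\sum_{y=s+1}^{\lfloor (t-s)/a\rfloor}\ \sum_{x=s+1}^{t-\lfloor ay\rfloor}1\;+\sum_{y=1}^{\lfloor (n-t)/a\rfloor}\ \sum_{x=t+1}^{n-\lfloor ay\rfloor}1\;+\sum_{y=t+1}^{\lfloor n/a\rfloor}\ \sum_{x=1}^{n-\lfloor ay\rfloor}1 , \] and the monochromatic generalized Schur triples are exactly the triples $(x,y,x+\lfloor ay\rfloor)$ with $(x,y)$ ranging over the index pairs of these four double sums.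
   Context: For real $a>0$, a generalized Schur triple on $[n]=\{1,\dots,n\}$ is an ordered triple $T=(x,y,x+\lfloor ay\rfloor)\in[n]^3$. The coloring $R^sB^{t-s}R^{n-t}$ colors $1,\dots,s$ and $t+1,\dots,n$ red and $s+1,\dots,t$ blue; $T$ is monochromatic if $T\in(\{1,\dots,s\}\cup\{t+1,\dots,n\})^3$ or $T\in\{s+1,\dots,t\}^3$, and $\mathcal{M}^{(a)}(n,s,t)$ is the number of such $T$. Convention: a sum whose lower bound exceeds its upper bound is $0$. *)

theory Defs
  imports Complex_Main
begin

definition gen_schur_triples :: "real \<Rightarrow> nat \<Rightarrow> (int \<times> int \<times> int) set" where
  "gen_schur_triples a n =
     {(x, y, z). x \<in> {1..int n} \<and> y \<in> {1..int n} \<and> z \<in> {1..int n} \<and>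
                 z = x + \<lfloor>a * of_int y\<rfloor>}"

definition red_set :: "nat \<Rightarrow> nat \<Rightarrow> nat \<Rightarrow> int set" where
  "red_set n s t = {1..int s} \<union> {int t + 1..int n}"

definition blue_set :: "nat \<Rightarrow> nat \<Rightarrow> int set" where
  "blue_set s t = {int s + 1..int t}"

definition mono_triples :: "real \<Rightarrow> nat \<Rightarrow> nat \<Rightarrow> nat \<Rightarrow> (int \<times> int \<times> int) set" where
  "mono_triples a n s t =
     {T \<in> gen_schur_triples a n.
        T \<in> red_set n s t \<times> red_set n s t \<times> red_set n s t \<or>
        T \<in> blue_set s t \<times> blue_set s t \<times> blue_set s t}"

definition M :: "real \<Rightarrow> nat \<Rightarrow> nat \<Rightarrow> nat \<Rightarrow> nat" where
  "M a n s t = card (mono_triples a n s t)"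

end

theory Submission
  imports Defs
begin

lemma key:
  fixes a :: real and n s t :: nat and x y z F :: int
  assumes a1: "a \<ge> 1" and "1 \<le> s" and "s \<le> t" and "t \<le> n"
    and h5: "a * real s + real t \<ge> real n"
    and h7: "real s + a * real s \<le> real t"
    and F1: "of_int F \<le> a * of_int y" and F2: "a * of_int y < of_int F + 1"
    and Fy: "y \<ge> 0 \<Longrightarrow> y \<le> F"
  shows "(x \<in> {1..int n} \<and> y \<in> {1..int n} \<and> z \<in> {1..int n} \<and> z = x + F \<and>
     ((x \<in> {1..int s} \<union> {int t + 1..int n} \<and> y \<in> {1..int s} \<union> {int t + 1..int n} \<and> z \<in> {1..int s} \<union> {int t + 1..int n})
      \<or> (x \<in> {int s + 1..int t} \<and> y \<in> {int s + 1..int t} \<and> z \<in> {int s + 1..int t})))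
   \<longleftrightarrow> z = x + F \<and>
     ((1 \<le> y \<and> a * y \<le> s \<and> 1 \<le> x \<and> x \<le> int s - F) \<or>
      (int s + 1 \<le> y \<and> a * y \<le> real t - real s \<and> int s + 1 \<le> x \<and> x \<le> int t - F) \<or>
      (1 \<le> y \<and> a * y \<le> real n - real t \<and> int t + 1 \<le> x \<and> x \<le> int n - F) \<or>
      (int t + 1 \<le> y \<and> a * y \<le> n \<and> 1 \<le> x \<and> x \<le> int n - F))"
    (is "?L \<longleftrightarrow> ?R")
proof
  assume L: ?L
  hence z: "z = x + F" by simp
  have y1: "y \<ge> 1" using L by auto
  have yF: "y \<le> F" using Fy y1 by simp
  have ry: "real_of_int y \<ge> 1" using y1 by simp
  have ay: "a * y \<ge> y" using a1 ry by (metis mult_right_mono mult_1 order_trans zero_le_one)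
  show ?R
  proof (cases "x \<in> {int s + 1..int t} \<and> y \<in> {int s + 1..int t} \<and> z \<in> {int s + 1..int t}")
    case True
    hence "F \<le> int t - int s - 1" using z by auto
    hence "real_of_int F \<le> real t - real s - 1" by linarith
    thus ?thesis using True z F2 by auto
  next
    case False
    hence R: "x \<in> {1..int s} \<union> {int t + 1..int n} \<and> y \<in> {1..int s} \<union> {int t + 1..int n} \<and> z \<in> {1..int s} \<union> {int t + 1..int n}"
      using L by blast
    show ?thesis
    proof (cases "y \<le> s")
      case ys: True
      have "a * y \<le> a * s" using ys a1 by (simp add: mult_left_mono)
      show ?thesis
      proof (cases "x \<le> s")
        case True
        have "z \<le> s"
        proof (rule ccontr)
          assume "\<not> z \<le> s"
          hence "z \<ge> t + 1" using R by auto
          hence "real_of_int x + F \<ge> real t + 1" using z by linarith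
          moreover have "real_of_int x \<le> s" using True by linarith
          ultimately show False using F1 \<open>a * y \<le> a * s\<close> h7 by linarith
        qed
        hence "F \<le> int s - 1" using z R by auto
        hence "real_of_int F \<le> real s - 1" by linarith
        thus ?thesis using R z F2 True \<open>z \<le> s\<close> by auto
      next
        case False
        hence "x \<ge> t + 1" using R by auto
        hence "F \<le> int n - int t - 1" using z L by auto
        hence "real_of_int F \<le> real n - real t - 1" by linarith
        thus ?thesis using R z F2 \<open>x \<ge> t + 1\<close> L by auto
      qed
    next
      case False
      hence yt: "y \<ge> t + 1" using R by auto
      have "x \<le> s"
      proof (rule ccontr)
        assume "\<not> x \<le> s"
        hence "x \<ge> t + 1" using R by auto
        hence "z \<ge> 2 * t + 2" using z yF yt by linarith
        moreover have "z \<le> n" using L by auto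
        moreover have "a * s \<le> t" using h7 by linarith
        ultimately show False using h5 by linarith
      qed
      have "F \<le> int n - 1" using z L by auto
      hence "real_of_int F \<le> real n - 1" by linarith
      thus ?thesis using yt z F2 L \<open>x \<le> s\<close> by auto
    qed
  qed
next
  assume R: ?R
  hence z: "z = x + F" by simp
  have ys1: "y \<ge> 1" using R by auto
  have yF: "y \<le> F" using Fy ys1 by simp
  have ry: "real_of_int y \<ge> 1" using ys1 by simp
  have ay: "a * y \<ge> y" using a1 ry by (metis mult_right_mono mult_1 order_trans zero_le_one)
  have as: "a * s \<le> t" using h7 by linarith
  have sa: "real s \<le> a * s" using a1 mult_right_mono[of 1 a "real s"] by simp
  show ?L
  proof -
    consider (c1) "1 \<le> y \<and> a * y \<le> s \<and> 1 \<le> x \<and> x \<le> int s - F"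
      | (c2) "int s + 1 \<le> y \<and> a * y \<le> real t - real s \<and> int s + 1 \<le> x \<and> x \<le> int t - F"
      | (c3) "1 \<le> y \<and> a * y \<le> real n - real t \<and> int t + 1 \<le> x \<and> x \<le> int n - F"
      | (c4) "int t + 1 \<le> y \<and> a * y \<le> n \<and> 1 \<le> x \<and> x \<le> int n - F"
      using R by blast
    thus ?thesis
    proof cases
      case c1
      have "real_of_int y \<le> s" using c1 ay by linarith
      hence "y \<le> s" by linarith
      thus ?thesis using c1 z yF assms by auto
    next
      case c2
      have "real_of_int y \<le> t" using c2 ay by linarith
      hence "y \<le> t" by linarith
      thus ?thesis using c2 z yF assms by auto
    next
      case c3
      have "a * y \<le> a * s" using c3 h5 by linarith
      hence "real_of_int y \<le> s" using a1 by simp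
      hence "y \<le> s" by linarith
      thus ?thesis using c3 z yF assms by auto
    next
      case c4
      have "real_of_int y \<ge> real t + 1" using c4 by linarith
      hence "a * y \<ge> a * (real t + 1)" using a1 by (simp add: mult_left_mono)
      moreover have "(real t - real s) * (a - 1) \<ge> 0" using assms by (intro mult_nonneg_nonneg) auto
      moreover have "(real t - real s) * (a - 1) = a * t - a * s - t + s" by (simp add: algebra_simps)
      moreover have "a * (real t + 1) = a * t + a" by (simp add: algebra_simps)
      moreover have "real_of_int x \<le> real n - F" using c4 by linarith
      ultimately have "real_of_int x < s + 1" using F2 h5 a1 by linarith
      hence "x \<le> s" by linarith
      have "real_of_int y \<le> n" using c4 ay by linarith
      hence "y \<le> n" by linarith
      thus ?thesis using c4 z yF assms \<open>x \<le> s\<close> by auto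
    qed
  qed
qed

lemma Q_eq: "{(x, y). y \<in> A \<and> x \<in> B y} = (\<lambda>(y, x). (x, y)) ` Sigma A B"
  by auto

lemma Q_fin: "finite A \<Longrightarrow> (\<And>y. finite (B y)) \<Longrightarrow> finite {(x, y). y \<in> A \<and> x \<in> B y}"
  unfolding Q_eq by auto

lemma Q_card: "finite A \<Longrightarrow> (\<And>y. finite (B y)) \<Longrightarrow>
   int (card {(x, y). y \<in> A \<and> x \<in> B y}) = (\<Sum>y\<in>A. \<Sum>x\<in>B y. (1::int))"
proof -
  assume fA: "finite A" and fB: "\<And>y. finite (B y)"
  have "card {(x, y). y \<in> A \<and> x \<in> B y} = card (Sigma A B)"
    unfolding Q_eq by (rule card_image) (auto simp: inj_on_def)
  also have "\<dots> = (\<Sum>y\<in>A. card (B y))" using fA fB by (simp add: card_SigmaI)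
  finally show ?thesis by simp
qed

lemma floor_div_iff: "(0::real) < a \<Longrightarrow> (y \<le> \<lfloor>c / a\<rfloor>) \<longleftrightarrow> a * of_int y \<le> c"
  by (simp add: le_floor_iff pos_le_divide_eq mult.commute)

theorem lemma4p1:
  fixes a :: real and n s t :: nat
  assumes "a \<ge> 1" and "1 \<le> s" and "s \<le> t" and "t \<le> n"
    and "a * real s + real t \<ge> real n"
    and "real t \<ge> a * real s"
    and "real s + a * real s \<le> real t"
  shows "(int (M a n s t) =
      (\<Sum>y\<in>{1..\<lfloor>real s / a\<rfloor>}. \<Sum>x\<in>{1..int s - \<lfloor>a * of_int y\<rfloor>}. (1::int))
    + (\<Sum>y\<in>{int s + 1..\<lfloor>real (t - s) / a\<rfloor>}. \<Sum>x\<in>{int s + 1..int t - \<lfloor>a * of_int y\<rfloor>}. (1::int))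
    + (\<Sum>y\<in>{1..\<lfloor>real (n - t) / a\<rfloor>}. \<Sum>x\<in>{int t + 1..int n - \<lfloor>a * of_int y\<rfloor>}. (1::int))
    + (\<Sum>y\<in>{int t + 1..\<lfloor>real n / a\<rfloor>}. \<Sum>x\<in>{1..int n - \<lfloor>a * of_int y\<rfloor>}. (1::int))) \<and>
    mono_triples a n s t =
      (\<lambda>(x, y). (x, y, x + \<lfloor>a * of_int y\<rfloor>)) `
        ({(x, y). y \<in> {1..\<lfloor>real s / a\<rfloor>} \<and> x \<in> {1..int s - \<lfloor>a * of_int y\<rfloor>}}
       \<union> {(x, y). y \<in> {int s + 1..\<lfloor>real (t - s) / a\<rfloor>} \<and> x \<in> {int s + 1..int t - \<lfloor>a * of_int y\<rfloor>}}
       \<union> {(x, y). y \<in> {1..\<lfloor>real (n - t) / a\<rfloor>} \<and> x \<in> {int t + 1..int n - \<lfloor>a * of_int y\<rfloor>}}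
       \<union> {(x, y). y \<in> {int t + 1..\<lfloor>real n / a\<rfloor>} \<and> x \<in> {1..int n - \<lfloor>a * of_int y\<rfloor>}})"
proof -
  have a0: "a > 0" using assms(1) by simp
  let ?g = "\<lambda>(x, y). (x, y, x + \<lfloor>a * of_int y\<rfloor>)"
  let ?S1 = "{(x, y). y \<in> {1..\<lfloor>real s / a\<rfloor>} \<and> x \<in> {1..int s - \<lfloor>a * of_int y\<rfloor>}}"
  let ?S2 = "{(x, y). y \<in> {int s + 1..\<lfloor>real (t - s) / a\<rfloor>} \<and> x \<in> {int s + 1..int t - \<lfloor>a * of_int y\<rfloor>}}"
  let ?S3 = "{(x, y). y \<in> {1..\<lfloor>real (n - t) / a\<rfloor>} \<and> x \<in> {int t + 1..int n - \<lfloor>a * of_int y\<rfloor>}}"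
  let ?S4 = "{(x, y). y \<in> {int t + 1..\<lfloor>real n / a\<rfloor>} \<and> x \<in> {1..int n - \<lfloor>a * of_int y\<rfloor>}}"
  have rts: "real (t - s) = real t - real s" using assms by (simp add: of_nat_diff)
  have rnt: "real (n - t) = real n - real t" using assms by (simp add: of_nat_diff)
  have seteq: "mono_triples a n s t = ?g ` (?S1 \<union> ?S2 \<union> ?S3 \<union> ?S4)"
  proof (rule set_eqI)
    fix p :: "int \<times> int \<times> int"
    obtain x y z where p: "p = (x, y, z)" by (cases p) auto
    have K: "(x \<in> {1..int n} \<and> y \<in> {1..int n} \<and> z \<in> {1..int n} \<and> z = x + \<lfloor>a * of_int y\<rfloor> \<and>
     ((x \<in> {1..int s} \<union> {int t + 1..int n} \<and> y \<in> {1..int s} \<union> {int t + 1..int n} \<and> z \<in> {1..int s} \<union> {int t + 1..int n})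
      \<or> (x \<in> {int s + 1..int t} \<and> y \<in> {int s + 1..int t} \<and> z \<in> {int s + 1..int t})))
   \<longleftrightarrow> z = x + \<lfloor>a * of_int y\<rfloor> \<and>
     ((1 \<le> y \<and> a * y \<le> s \<and> 1 \<le> x \<and> x \<le> int s - \<lfloor>a * of_int y\<rfloor>) \<or>
      (int s + 1 \<le> y \<and> a * y \<le> real t - real s \<and> int s + 1 \<le> x \<and> x \<le> int t - \<lfloor>a * of_int y\<rfloor>) \<or>
      (1 \<le> y \<and> a * y \<le> real n - real t \<and> int t + 1 \<le> x \<and> x \<le> int n - \<lfloor>a * of_int y\<rfloor>) \<or>
      (int t + 1 \<le> y \<and> a * y \<le> n \<and> 1 \<le> x \<and> x \<le> int n - \<lfloor>a * of_int y\<rfloor>))"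
    proof (rule key[OF assms(1-5) assms(7)])
      show "real_of_int \<lfloor>a * of_int y\<rfloor> \<le> a * of_int y" by (rule of_int_floor_le)
      show "a * of_int y < real_of_int \<lfloor>a * of_int y\<rfloor> + 1" by (rule real_of_int_floor_add_one_gt)
      assume "y \<ge> 0"
      hence "real_of_int y \<le> a * of_int y" using assms(1) mult_right_mono[of 1 a "real_of_int y"] by simp
      thus "y \<le> \<lfloor>a * of_int y\<rfloor>" by (simp add: le_floor_iff)
    qed
    have "p \<in> mono_triples a n s t \<longleftrightarrow> (x \<in> {1..int n} \<and> y \<in> {1..int n} \<and> z \<in> {1..int n} \<and> z = x + \<lfloor>a * of_int y\<rfloor> \<and>
     ((x \<in> {1..int s} \<union> {int t + 1..int n} \<and> y \<in> {1..int s} \<union> {int t + 1..int n} \<and> z \<in> {1..int s} \<union> {int t + 1..int n})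
      \<or> (x \<in> {int s + 1..int t} \<and> y \<in> {int s + 1..int t} \<and> z \<in> {int s + 1..int t})))"
      unfolding p mono_triples_def gen_schur_triples_def red_set_def blue_set_def by blast
    also have "\<dots> \<longleftrightarrow> p \<in> ?g ` (?S1 \<union> ?S2 \<union> ?S3 \<union> ?S4)"
      unfolding K p using a0 by (auto simp: floor_div_iff rts rnt)
    finally show "p \<in> mono_triples a n s t \<longleftrightarrow> p \<in> ?g ` (?S1 \<union> ?S2 \<union> ?S3 \<union> ?S4)" .
  qed
  have inj: "inj_on ?g (?S1 \<union> ?S2 \<union> ?S3 \<union> ?S4)" by (auto simp: inj_on_def)
  have f1: "finite ?S1" by (rule Q_fin) auto
  have f2: "finite ?S2" by (rule Q_fin) auto
  have f3: "finite ?S3" by (rule Q_fin) auto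
  have f4: "finite ?S4" by (rule Q_fin) auto
  have fpos: "\<And>y::int. y \<ge> 1 \<Longrightarrow> 0 \<le> \<lfloor>a * of_int y\<rfloor>" using a0 by simp
  have d12: "?S1 \<inter> ?S2 = {}"
  proof (rule equals0I)
    fix p assume "p \<in> ?S1 \<inter> ?S2"
    then obtain x y where "1 \<le> y" "x \<le> int s - \<lfloor>a * of_int y\<rfloor>" "int s + 1 \<le> x" by auto
    thus False using fpos[of y] by linarith
  qed
  have fy: "\<And>y::int. y \<ge> 1 \<Longrightarrow> y \<le> \<lfloor>a * of_int y\<rfloor>"
  proof -
    fix y :: int assume "y \<ge> 1"
    hence "real_of_int y \<le> a * of_int y" using assms(1) mult_right_mono[of 1 a "real_of_int y"] by simp
    thus "y \<le> \<lfloor>a * of_int y\<rfloor>" by (simp add: le_floor_iff)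
  qed
  have "real n \<le> 2 * real t" using assms(5,6) by linarith
  hence n2t: "int n \<le> 2 * int t" by linarith
  have d123: "(?S1 \<union> ?S2) \<inter> ?S3 = {}"
  proof (rule equals0I)
    fix p assume "p \<in> (?S1 \<union> ?S2) \<inter> ?S3"
    then obtain x y where "1 \<le> y" "int t + 1 \<le> x"
      "x \<le> int s - \<lfloor>a * of_int y\<rfloor> \<or> x \<le> int t - \<lfloor>a * of_int y\<rfloor>" by auto
    thus False using fpos[of y] assms(3) by linarith
  qed
  have d1234: "(?S1 \<union> ?S2 \<union> ?S3) \<inter> ?S4 = {}"
  proof (rule equals0I)
    fix p assume A: "p \<in> (?S1 \<union> ?S2 \<union> ?S3) \<inter> ?S4"
    then obtain x y where p: "p = (x, y)" "int t + 1 \<le> y" "1 \<le> x" "x \<le> int n - \<lfloor>a * of_int y\<rfloor>" by auto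
    have F: "int t + 1 \<le> \<lfloor>a * of_int y\<rfloor>" using fy[of y] p by linarith
    show False using A p F n2t assms(3) by auto
  qed
  have "card (mono_triples a n s t) = card (?S1 \<union> ?S2 \<union> ?S3 \<union> ?S4)"
    unfolding seteq by (rule card_image[OF inj])
  also have "\<dots> = card ?S1 + card ?S2 + card ?S3 + card ?S4"
    using f1 f2 f3 f4 d12 d123 d1234 by (simp add: card_Un_disjoint)
  finally have "int (M a n s t) = int (card ?S1) + int (card ?S2) + int (card ?S3) + int (card ?S4)"
    unfolding M_def by simp
  moreover have "int (card ?S1) = (\<Sum>y\<in>{1..\<lfloor>real s / a\<rfloor>}. \<Sum>x\<in>{1..int s - \<lfloor>a * of_int y\<rfloor>}. (1::int))"
    by (rule Q_card) auto
  moreover have "int (card ?S2) = (\<Sum>y\<in>{int s + 1..\<lfloor>real (t - s) / a\<rfloor>}. \<Sum>x\<in>{int s + 1..int t - \<lfloor>a * of_int y\<rfloor>}. (1::int))"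
    by (rule Q_card) auto
  moreover have "int (card ?S3) = (\<Sum>y\<in>{1..\<lfloor>real (n - t) / a\<rfloor>}. \<Sum>x\<in>{int t + 1..int n - \<lfloor>a * of_int y\<rfloor>}. (1::int))"
    by (rule Q_card) auto
  moreover have "int (card ?S4) = (\<Sum>y\<in>{int t + 1..\<lfloor>real n / a\<rfloor>}. \<Sum>x\<in>{1..int n - \<lfloor>a * of_int y\<rfloor>}. (1::int))"
    by (rule Q_card) auto
  ultimately show ?thesis using seteq by simp
qed

end
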